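(* Let $R\subseteq\mathbb{C}$ be a subset such that $M:=\inf\{|x|: x\in R\setminus\{0\}\}>0$. Let $\mathcal{F}=(c_{i,j})$ be a frieze pattern over $R\setminus\{0\}$ of height $n\in\mathbb{N}$. Then every entry $c_{i,i+2}$ ($i\in\mathbb{Z}$) of its quiddity cycle satisfies $$|c_{i,i+2}|\le\frac{(n-1)+2M}{M^2}.$$
   Context: A frieze pattern of height $n$ over $S\subseteq\mathbb{C}$ is a family $(c_{i,j})_{i\in\mathbb{Z},\ i\le j\le i+n+3}$ of complex numbers such that: - $c_{i,i}=c_{i,i+n+3}=0$ and $c_{i,i+1}=c_{i,i+n+2}=1$; - $c_{i,j}\in S$ for $i+2\le j\le i+n+1$; - every adjacent $2\times2$ determinant $c_{i,j}c_{i+1,j+1}-c_{i,j+1}c_{i+1,j}$ (all entries defined) equals $1$. "Over $R\setminus\{0\}$" means all entries $c_{i,j}$ with $i+2\le j\le i+n+1$ are nonzero elements of $R$. The quiddity cycle of the pattern consists of the entries $c_{i,i+2}$ of its first nontrivial diagonal. *)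

theory Defs
  imports Complex_Main
begin

text \<open>A frieze pattern of height n over S. The family (c i j) is modelled as a
total function int => int => complex; only the values with i <= j <= i+n+3 matter.\<close>
definition frieze_pattern :: "nat \<Rightarrow> complex set \<Rightarrow> (int \<Rightarrow> int \<Rightarrow> complex) \<Rightarrow> bool" where
  "frieze_pattern n S c \<longleftrightarrow>
     (\<forall>i::int. c i i = 0 \<and> c i (i + int n + 3) = 0 \<and>
               c i (i + 1) = 1 \<and> c i (i + int n + 2) = 1) \<and>
     (\<forall>i j::int. i + 2 \<le> j \<and> j \<le> i + int n + 1 \<longrightarrow> c i j \<in> S) \<and>
     (\<forall>i j::int. i + 1 \<le> j \<and> j \<le> i + int n + 2 \<longrightarrow>
        c i j * c (i + 1) (j + 1) - c i (j + 1) * c (i + 1) j = 1)"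

end

theory Submission
  imports Defs
begin

theorem theorem3p6:
  fixes R :: "complex set" and n :: nat and c :: "int \<Rightarrow> int \<Rightarrow> complex" and M :: real
  assumes "M = Inf (norm ` (R - {0}))"
    and "M > 0"
    and "n \<ge> 1"
    and "frieze_pattern n (R - {0}) c"
  shows "\<forall>i::int. norm (c i (i + 2)) \<le> ((real n - 1) + 2 * M) / M ^ 2"
proof
  fix i :: int
  have bd: "\<And>x. x \<in> R - {0} \<Longrightarrow> M \<le> norm x"
    unfolding assms(1) by (rule cInf_lower) (auto intro: bdd_belowI[where m=0])
  note F = assms(4)[unfolded frieze_pattern_def]
  define d where "d m = c (i+1) (i + 2 + int m)" for m :: nat
  define a where "a = c i (i+2)"
  have d0: "d 0 = 1" using F unfolding d_def by (metis add.assoc add.commute add_0_right of_nat_0 one_add_one)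
  have dn: "d (n+1) = 1" using F unfolding d_def
    by (metis (no_types, opaque_lifting) add.assoc add.commute of_nat_Suc Suc_eq_plus1 one_add_one)
  have dR: "d m \<in> R - {0}" if "1 \<le> m" "m \<le> n" for m
    using F that unfolding d_def by auto
  have dnz: "d m \<noteq> 0" if "m \<le> n+1" for m
    using that d0 dn dR by (cases "m = 0"; cases "m = n+1") auto
  have rec: "c i (i + 2 + int m) / d m = a - (\<Sum>l<m. 1 / (d l * d (Suc l)))" if "m \<le> n+1" for m
    using that
  proof (induction m)
    case 0 then show ?case using d0 a_def by simp
  next
    case (Suc m)
    have det: "c i (i + 2 + int m) * d (Suc m) - c i (i + 2 + int (Suc m)) * d m = 1"
    proof -
      have D: "\<forall>i j::int. i + 1 \<le> j \<and> j \<le> i + int n + 2 \<longrightarrow>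
        c i j * c (i + 1) (j + 1) - c i (j + 1) * c (i + 1) j = 1" using F by blast
      have "c i (i + 2 + int m) * c (i + 1) (i + 2 + int m + 1) - c i (i + 2 + int m + 1) * c (i + 1) (i + 2 + int m) = 1"
        using spec[OF spec[OF D, of i], of "i + 2 + int m"] Suc.prems by simp
      then show ?thesis unfolding d_def by (simp add: algebra_simps)
    qed
    have nz1: "d m \<noteq> 0" "d (Suc m) \<noteq> 0" using dnz Suc.prems by auto
    from det have "c i (i + 2 + int (Suc m)) / d (Suc m) = c i (i + 2 + int m) / d m - 1 / (d m * d (Suc m))"
      using nz1 by (simp add: field_simps)
    then show ?case using Suc by simp
  qed
  have "c i (i + 2 + int (n+1)) = 0" using F by (auto simp: algebra_simps)
  then have aeq: "a = (\<Sum>l<n+1. 1 / (d l * d (Suc l)))" using rec[of "n+1"] by simp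
  have Mle: "M \<le> norm (d m)" if "1 \<le> m" "m \<le> n" for m using bd dR that by blast
  have set: "{..<n+1} = insert 0 (insert n {1..<n})" using assms(3) by auto
  have "a = 1 / (d 0 * d 1) + (1 / (d n * d (Suc n)) + (\<Sum>l\<in>{1..<n}. 1 / (d l * d (Suc l))))"
    unfolding aeq set using assms(3) by (simp add: sum.insert)
  also have "norm \<dots> \<le> 1/M + (1/M + (real (n-1)) * (1/M^2))"
  proof -
    have t0: "norm (1 / (d 0 * d 1)) \<le> 1/M"
      using d0 Mle[of 1] assms(2,3) by (simp add: norm_divide norm_mult divide_simps)
    have tn: "norm (1 / (d n * d (Suc n))) \<le> 1/M"
      using dn Mle[of n] assms(2,3) by (simp add: norm_divide norm_mult divide_simps)
    have tm: "norm (\<Sum>l\<in>{1..<n}. 1 / (d l * d (Suc l))) \<le> real (n-1) * (1/M^2)"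
    proof -
      have "norm (\<Sum>l\<in>{1..<n}. 1 / (d l * d (Suc l))) \<le> (\<Sum>l\<in>{1..<n}. 1/M^2)"
      proof (rule sum_norm_le)
        fix l assume l: "l \<in> {1..<n}"
        have "M \<le> norm (d l)" "M \<le> norm (d (Suc l))" using Mle l by auto
        then have "M*M \<le> norm (d l) * norm (d (Suc l))"
          using assms(2) by (intro mult_mono) auto
        then show "norm (1 / (d l * d (Suc l))) \<le> 1/M^2"
          using assms(2) by (simp add: norm_divide norm_mult power2_eq_square frac_le)
      qed
      then show ?thesis by simp
    qed
    show ?thesis using t0 tn tm norm_triangle_le
      by (smt (verit, ccfv_SIG) norm_triangle_ineq)
  qed
  also have "\<dots> = ((real n - 1) + 2 * M) / M ^ 2"
    using assms(2,3) by (simp add: of_nat_diff field_simps power2_eq_square)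
  finally show "norm (c i (i + 2)) \<le> ((real n - 1) + 2 * M) / M ^ 2" unfolding a_def .
qed

end
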